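(* Let $y_1,\dots,y_n\in\mathbb{R}^k$, $r\in\{1,\dots,n\}$, and let $\mathcal{A}_1,\dots,\mathcal{A}_m$ be a fixed partition of $\mathbb{R}^k$ into $m$ disjoint regions. For $R\in\mathrm{SO}(k)$, diagonal matrices $D_1,\dots,D_m\succcurlyeq 0$, exponents $p_1,\dots,p_m>0$ and $\mu\in\mathbb{R}^k$, define $$d(y,\mu;R,\{D_j\}_{j=1}^m)=\sum_{j=1}^m \mathds{1}\{R(y-\mu)\in\mathcal{A}_j\}\,\|RD_j(y-\mu)\|_{p_j},$$ and $V(\{p_j\},\{D_j\})=\frac{1}{m}\sum_{j=1}^m\lambda(B_{\|\cdot\|_{p_j}}(1))\det(D_j)^{-1}$. Consider $$\text{(A)}\quad \min\ V(\{p_j\},\{D_j\})\quad\text{s.t.}\ R\in\mathrm{SO}(k),\ \mu\in\mathbb{R}^k,\ D_j\in\mathrm{Diag}(k),\ D_j\succcurlyeq 0,\ p_j>0\ \forall j\in[m],\ \mathrm{Card}\{i\in[n]: d(y_i,\mu;R,\{D_j\})\le 1\}\ge n-r+1,$$ and $$\text{(B)}\quad \min\ k\log\big(\sigma_r\{d(y_i,\mu;R,\{D_j\})\}\big)+\log\Big(\sum_{j=1}^m\lambda(B_{\|\cdot\|_{p_j}}(1))\det(D_j)^{-1}\Big)\quad\text{s.t.}\ R\in\mathrm{SO}(k),\ \mu\in\mathbb{R}^k,\ D_j\in\mathrm{Diag}(k),\ D_j\succcurlyeq 0,\ p_j>0\ \forall j\in[m].$$ Then problems (A) and (B) are equivale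nt.
   Context: $\mathrm{SO}(k)=\{R\in\mathbb{R}^{k\times k}: R^\top R=I,\ \det R=1\}$; $\mathrm{Diag}(k)$ is the set of diagonal $k\times k$ matrices. For $p>0$, $\|z\|_p=(\sum_j|z_j|^p)^{1/p}$ and $\lambda(B_{\|\cdot\|_p}(1))=\frac{2^k\Gamma(1+1/p)^k}{\Gamma(1+k/p)}$ is the Lebesgue measure of the unit $\|\cdot\|_p$-ball in $\mathbb{R}^k$. $\det(D)^{-1}$ is $+\infty$ for singular $D$. $\mathds{1}\{\cdot\}$ is the indicator function. For reals $a_1,\dots,a_n$, $\sigma_r\{a_i\}$ denotes the $r$-th largest of them. The quantity $V$ is the paper's definition of the volume of the multi-norm set $\{y: d(y,\mu;R,\{D_j\})\le 1\}$. *)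

theory Defs
  imports "HOL-Analysis.Analysis"
begin

definition lpnorm :: "real \<Rightarrow> real^'k \<Rightarrow> real" where
  "lpnorm p z = (\<Sum>i\<in>UNIV. \<bar>z $ i\<bar> powr p) powr (1 / p)"

text \<open>Lebesgue measure of the unit p-ball in R^k (closed form given in the paper).\<close>
definition ball_vol :: "real \<Rightarrow> nat \<Rightarrow> real" where
  "ball_vol p k = 2 ^ k * Gamma (1 + 1 / p) ^ k / Gamma (1 + real k / p)"

definition is_SO :: "real^'k^'k \<Rightarrow> bool" where
  "is_SO R \<longleftrightarrow> orthogonal_matrix R \<and> det R = 1"

definition is_diag :: "real^'k^'k \<Rightarrow> bool" where
  "is_diag D \<longleftrightarrow> (\<forall>i j. i \<noteq> j \<longrightarrow> D $ i $ j = 0)"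

definition psd :: "real^'k^'k \<Rightarrow> bool" where
  "psd D \<longleftrightarrow> (\<forall>x. 0 \<le> x \<bullet> (D *v x))"

definition inv_det :: "real^'k^'k \<Rightarrow> ereal" where
  "inv_det D = (if det D = 0 then \<infinity> else ereal (1 / det D))"

definition eln :: "ereal \<Rightarrow> ereal" where
  "eln x = (if x = \<infinity> then \<infinity> else if x \<le> 0 then -\<infinity> else ereal (ln (real_of_ereal x)))"

definition sigma_r :: "nat \<Rightarrow> real list \<Rightarrow> real" where
  "sigma_r r xs = rev (sort xs) ! (r - 1)"

text \<open>Multi-norm distance d(y, mu; R, {D_j}); regions and parameters indexed by j < m.\<close>
definition mdist :: "(nat \<Rightarrow> (real^'k) set) \<Rightarrow> nat \<Rightarrow> real^'k^'k \<Rightarrow> (nat \<Rightarrow> real^'k^'k)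
     \<Rightarrow> (nat \<Rightarrow> real) \<Rightarrow> real^'k \<Rightarrow> real^'k \<Rightarrow> real" where
  "mdist A m R D p mu y =
     (\<Sum>j<m. (if R *v (y - mu) \<in> A j then 1 else 0) * lpnorm (p j) (R *v (D j *v (y - mu))))"

definition vol_sum :: "nat \<Rightarrow> (nat \<Rightarrow> real) \<Rightarrow> (nat \<Rightarrow> real^'k^'k) \<Rightarrow> ereal" where
  "vol_sum m p D = (\<Sum>j<m. ereal (ball_vol (p j) CARD('k)) * inv_det (D j))"

definition volV :: "nat \<Rightarrow> (nat \<Rightarrow> real) \<Rightarrow> (nat \<Rightarrow> real^'k^'k) \<Rightarrow> ereal" where
  "volV m p D = ereal (1 / real m) * vol_sum m p D"

definition admissible :: "nat \<Rightarrow> real^'k^'k \<Rightarrow> (nat \<Rightarrow> real^'k^'k) \<Rightarrow> (nat \<Rightarrow> real) \<Rightarrow> bool" where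
  "admissible m R D p \<longleftrightarrow> is_SO R \<and> (\<forall>j<m. is_diag (D j) \<and> psd (D j) \<and> p j > 0)"

definition feasA :: "(nat \<Rightarrow> (real^'k) set) \<Rightarrow> nat \<Rightarrow> (nat \<Rightarrow> real^'k) \<Rightarrow> nat \<Rightarrow> nat
     \<Rightarrow> real^'k^'k \<Rightarrow> real^'k \<Rightarrow> (nat \<Rightarrow> real^'k^'k) \<Rightarrow> (nat \<Rightarrow> real) \<Rightarrow> bool" where
  "feasA A m y n r R mu D p \<longleftrightarrow> admissible m R D p \<and>
     n - r + 1 \<le> card {i. i < n \<and> mdist A m R D p mu (y i) \<le> 1}"

definition objB :: "(nat \<Rightarrow> (real^'k) set) \<Rightarrow> nat \<Rightarrow> (nat \<Rightarrow> real^'k) \<Rightarrow> nat \<Rightarrow> nat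
     \<Rightarrow> real^'k^'k \<Rightarrow> real^'k \<Rightarrow> (nat \<Rightarrow> real^'k^'k) \<Rightarrow> (nat \<Rightarrow> real) \<Rightarrow> ereal" where
  "objB A m y n r R mu D p =
     ereal (real CARD('k)) * eln (ereal (sigma_r r (map (\<lambda>i. mdist A m R D p mu (y i)) [0..<n])))
     + eln (vol_sum m p D)"

end

theory Submission
  imports Defs
begin

lemma lpnorm_scale: assumes "p > 0" "c \<ge> 0" shows "lpnorm p (c *\<^sub>R z) = c * lpnorm p z"
proof -
  have "(\<Sum>i\<in>UNIV. \<bar>(c *\<^sub>R z) $ i\<bar> powr p) = c powr p * (\<Sum>i\<in>UNIV. \<bar>z $ i\<bar> powr p)"
    using assms by (simp add: abs_mult powr_mult sum_distrib_left)
  then have "lpnorm p (c *\<^sub>R z) = (c powr p) powr (1/p) * (\<Sum>i\<in>UNIV. \<bar>z $ i\<bar> powr p) powr (1/p)"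
    unfolding lpnorm_def using assms by (simp add: powr_mult sum_nonneg)
  also have "(c powr p) powr (1/p) = c" using assms by (simp add: powr_powr)
  finally show ?thesis unfolding lpnorm_def .
qed
lemma lpnorm_nonneg: "lpnorm p z \<ge> 0" unfolding lpnorm_def by simp
lemma mdist_scale: assumes "\<forall>j<m. p j > 0" "c \<ge> 0"
  shows "mdist A m R (\<lambda>j. c *\<^sub>R D j) p mu y = c * mdist A m R D p mu y"
  unfolding mdist_def sum_distrib_left
  using assms by (intro sum.cong) (auto simp: scaleR_matrix_vector_assoc[symmetric] matrix_vector_mult_scaleR lpnorm_scale)
lemma mdist_nonneg: "mdist A m R D p mu y \<ge> 0"
  unfolding mdist_def by (intro sum_nonneg) (simp add: lpnorm_nonneg)
lemma diag_nonneg: assumes "psd D" shows "D $ i $ i \<ge> 0"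
proof -
  have "0 \<le> axis i 1 \<bullet> (D *v axis i 1)" using assms unfolding psd_def by blast
  moreover have "(D *v axis i 1) $ i = D $ i $ i"
    by (simp add: matrix_vector_mult_def axis_def if_distrib[where f="\<lambda>x. _ * x"] cong: if_cong)
  ultimately show ?thesis by (simp add: inner_axis')
qed
lemma det_nonneg: assumes "is_diag D" "psd D" shows "det D \<ge> 0"
  using assms by (simp add: det_diagonal is_diag_def prod_nonneg diag_nonneg)
lemma inv_det_pos: assumes "is_diag D" "psd D" shows "inv_det D > 0"
  using det_nonneg[OF assms] by (auto simp: inv_det_def)
lemma inv_det_scale: assumes "is_diag (D::real^'k^'k)" "c > 0"
  shows "inv_det (c *\<^sub>R D) = ereal ((1/c) ^ CARD('k)) * inv_det D"
proof -
  have "det (c *\<^sub>R D) = c ^ CARD('k) * det D"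
    using assms by (simp add: det_diagonal is_diag_def prod.distrib)
  then show ?thesis using assms by (auto simp: inv_det_def power_one_over)
qed
lemma ball_vol_pos: assumes "p > 0" shows "ball_vol p k > 0"
  unfolding ball_vol_def using assms by (intro divide_pos_pos mult_pos_pos zero_less_power Gamma_real_pos) (auto intro: add_pos_nonneg)
lemma term_pos: assumes "p > 0" "is_diag D" "psd D" shows "0 < ereal (ball_vol p k) * inv_det D"
  using assms by (simp add: ereal_zero_less_0_iff ball_vol_pos inv_det_pos)
lemma vol_sum_scale: assumes "\<forall>j<m. is_diag (D j) \<and> psd (D j) \<and> p j > 0" "c > 0"
  shows "vol_sum m p (\<lambda>j. c *\<^sub>R (D j :: real^'k^'k)) = ereal ((1/c) ^ CARD('k)) * vol_sum m p D"
  unfolding vol_sum_def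
  apply (subst sum_ereal_right_distrib)
  subgoal for i using assms term_pos[of "p i" "D i"] by (auto intro!: less_imp_le)
  using assms by (intro sum.cong) (auto simp: inv_det_scale mult_ac)
lemma vol_sum_pos: assumes "\<forall>j<m. is_diag (D j) \<and> psd (D j) \<and> p j > 0" "m > 0"
  shows "vol_sum m p (D :: nat \<Rightarrow> real^'k^'k) > 0"
proof -
  have "0<inv_det (D 0)" using assms by (auto intro: inv_det_pos)
  then have "0 < ereal (ball_vol (p 0) CARD('k)) * inv_det (D 0)"
    using assms ball_vol_pos by (simp add: ereal_zero_less_0_iff ereal_zero_mult)
  also have "\<dots> \<le> vol_sum m p D" unfolding vol_sum_def
    using assms term_pos
    by (intro sum_nonneg_leq_bound[where f="\<lambda>j. ereal (ball_vol (p j) CARD('k)) * inv_det (D j)" and i=0, OF _ _ refl]) (auto intro!: less_imp_le)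
  finally show ?thesis .
qed
lemma sigma_props:
  fixes xs :: "real list"
  assumes "length xs = n" "1 \<le> r" "r \<le> n"
  shows "sigma_r r xs \<in> set xs"
    and "n - r + 1 \<le> card {i. i < n \<and> xs ! i \<le> sigma_r r xs}"
    and "r \<le> card {i. i < n \<and> sigma_r r xs \<le> xs ! i}"
proof -
  define L where "L = rev (sort xs)"
  have lenL: "length L = n" using assms by (simp add: L_def)
  have sig: "sigma_r r xs = L ! (r - 1)" by (simp add: sigma_r_def L_def)
  have mono: "L ! j \<le> L ! i" if "i \<le> j" "j < n" for i j
  proof -
    have "L ! j = sort xs ! (n - Suc j)" "L ! i = sort xs ! (n - Suc i)"
      using that assms by (auto simp: L_def rev_nth)
    moreover have "sort xs ! (n - Suc j) \<le> sort xs ! (n - Suc i)"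
      using that assms by (intro sorted_nth_mono) auto
    ultimately show ?thesis by simp
  qed
  have cnt: "card {i. i < n \<and> P (xs ! i)} = card {i. i < n \<and> P (L ! i)}" for P
  proof -
    have "length (filter P L) = length (filter P xs)"
      by (metis mset_filter size_mset mset_rev mset_sort L_def)
    then show ?thesis using assms lenL by (simp add: length_filter_conv_card)
  qed
  show "sigma_r r xs \<in> set xs"
    using assms lenL by (metis L_def sig nth_mem set_rev set_sort diff_less less_le_trans zero_less_one)
  have "{r - 1..<n} \<subseteq> {i. i < n \<and> L ! i \<le> L ! (r - 1)}" using mono by auto
  then have "card {r - 1..<n} \<le> card {i. i < n \<and> L ! i \<le> L ! (r - 1)}"
    by (intro card_mono) auto
  then show "n - r + 1 \<le> card {i. i < n \<and> xs ! i \<le> sigma_r r xs}"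
    using assms cnt[of "\<lambda>x. x \<le> L ! (r - 1)"] by (simp add: sig)
  have "{..<r} \<subseteq> {i. i < n \<and> L ! (r - 1) \<le> L ! i}" using mono assms by auto
  then have "card {..<r} \<le> card {i. i < n \<and> L ! (r - 1) \<le> L ! i}"
    by (intro card_mono) auto
  then show "r \<le> card {i. i < n \<and> sigma_r r xs \<le> xs ! i}"
    using assms cnt[of "\<lambda>x. L ! (r - 1) \<le> x"] by (simp add: sig)
qed

lemma sigma_map_props:
  fixes f :: "nat \<Rightarrow> real"
  assumes "1 \<le> r" "r \<le> n"
  shows "sigma_r r (map f [0..<n]) \<in> f ` {..<n}"
    and "n - r + 1 \<le> card {i. i < n \<and> f i \<le> sigma_r r (map f [0..<n])}"
    and "r \<le> card {i. i < n \<and> sigma_r r (map f [0..<n]) \<le> f i}"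
proof -
  have e: "{i. i < n \<and> map f [0..<n] ! i \<le> X} = {i. i < n \<and> f i \<le> X}"
     "{i. i < n \<and> X \<le> map f [0..<n] ! i} = {i. i < n \<and> X \<le> f i}" for X by auto
  show "sigma_r r (map f [0..<n]) \<in> f ` {..<n}"
    using sigma_props(1)[of "map f [0..<n]" n r] assms by auto
  show "n - r + 1 \<le> card {i. i < n \<and> f i \<le> sigma_r r (map f [0..<n])}"
    using sigma_props(2)[of "map f [0..<n]" n r] assms e by simp
  show "r \<le> card {i. i < n \<and> sigma_r r (map f [0..<n]) \<le> f i}"
    using sigma_props(3)[of "map f [0..<n]" n r] assms e by simp
qed

lemma sigma_le:
  fixes f :: "nat \<Rightarrow> real"
  assumes "1 \<le> r" "r \<le> n" "n - r + 1 \<le> card {i. i < n \<and> f i \<le> b}"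
  shows "sigma_r r (map f [0..<n]) \<le> b"
proof (rule ccontr)
  let ?s = "sigma_r r (map f [0..<n])"
  assume "\<not> ?s \<le> b"
  then have "{i. i < n \<and> ?s \<le> f i} \<subseteq> {..<n} - {i. i < n \<and> f i \<le> b}" by auto
  then have "card {i. i < n \<and> ?s \<le> f i} \<le> card ({..<n} - {i. i < n \<and> f i \<le> b})"
    by (intro card_mono) auto
  also have "\<dots> = n - card {i. i < n \<and> f i \<le> b}"
    by (subst card_Diff_subset) auto
  finally show False using sigma_map_props(3)[OF assms(1,2), of f] assms by linarith
qed


lemma eln_mult: assumes "a > 0" "X > 0" shows "eln (ereal a * X) = ereal (ln a) + eln X"
proof (cases X)
  case (real x)
  then have "0 < a * x" using assms by simp
  moreover have "\<not> a * x \<le> 0" using \<open>0 < a * x\<close> by linarith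
  ultimately show ?thesis using assms real by (simp add: eln_def ln_mult)
qed (use assms in \<open>auto simp: eln_def\<close>)

lemma eln_less: assumes "x \<ge> 0" shows "eln x < ereal z \<longleftrightarrow> x < ereal (exp z)"
proof (cases x)
  case (real a)
  show ?thesis
  proof (cases "a \<le> 0")
    case True then show ?thesis using real by (auto simp: eln_def intro: le_less_trans[of a 0])
  next
    case False
    then have "ln a < z \<longleftrightarrow> a < exp z" by (metis exp_less_cancel_iff exp_ln not_le)
    then show ?thesis using real False by (simp add: eln_def)
  qed
qed (use assms in \<open>auto simp: eln_def\<close>)

lemma eln_mono: assumes "x \<le> y" shows "eln x \<le> eln y"
  using assms by (cases x; cases y) (auto simp: eln_def)

lemma eln_Inf_bound:
  fixes S :: "ereal set"
  assumes c: "c > 0" and nn: "\<forall>v\<in>S. 0 \<le> v" and b: "\<forall>v\<in>S. b \<le> eln (ereal c * v)"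
  shows "b \<le> eln (ereal c * Inf S)"
proof (rule ccontr)
  assume "\<not> ?thesis"
  then have "eln (ereal c * Inf S) < b" by simp
  then obtain z where z1: "eln (ereal c * Inf S) < ereal z" and z2: "ereal z < b"
    using ereal_dense2 by blast
  have I0: "Inf S \<ge> 0" using nn by (simp add: le_Inf_iff)
  then have "ereal c * Inf S \<ge> 0" using c by simp
  then have "ereal c * Inf S < ereal (exp z)" using z1 eln_less by blast
  moreover have "ereal c * ereal (exp z / c) = ereal (exp z)" using c by simp
  ultimately have "ereal c * Inf S < ereal c * ereal (exp z / c)" by simp
  then have "Inf S < ereal (exp z / c)"
    using c by (metis ereal_less(2) ereal_mult_left_mono less_imp_le not_le)
  then obtain v where v: "v \<in> S" "v < ereal (exp z / c)" by (auto simp: Inf_less_iff)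
  then have "ereal c * v \<le> ereal c * ereal (exp z / c)"
    using c by (intro ereal_mult_left_mono) auto
  moreover have "ereal c * v \<noteq> ereal (exp z)"
  proof
    assume "ereal c * v = ereal (exp z)"
    then have "v = ereal (exp z / c)" using c by (cases v) (auto simp: field_simps)
    then show False using v by simp
  qed
  ultimately have "ereal c * v < ereal (exp z)" using c by simp
  then have lt: "eln (ereal c * v) < ereal z" using eln_less nn v c by simp
  have "b \<le> eln (ereal c * v)" using b v by blast
  also have "\<dots> < ereal z" by (fact lt)
  also have "\<dots> < b" by (fact z2)
  finally have "b < b" .
  then show False by simp
qed

lemma eln_ereal_pos: "a > 0 \<Longrightarrow> eln (ereal a) = ereal (ln a)" by (simp add: eln_def)
lemma eln_zero: "eln 0 = -\<infinity>" by (simp add: eln_def)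
lemma eln_inf: "eln \<infinity> = \<infinity>" by (simp add: eln_def)
lemma eln_inj: assumes "x \<ge> 0" "y \<ge> 0" "eln x = eln y" shows "x = y"
proof -
  have cx: "x = 0 \<or> x = \<infinity> \<or> (\<exists>a>0. x = ereal a)" using assms(1)
    by (cases x) (auto simp: less_le)
  have cy: "y = 0 \<or> y = \<infinity> \<or> (\<exists>a>0. y = ereal a)" using assms(2)
    by (cases y) (auto simp: less_le)
  from cx cy assms(3) show ?thesis
    by (auto simp: eln_ereal_pos eln_zero eln_inf simp del: ereal_eq_0)
qed
lemma ereal_addle: "a \<le> 0 \<Longrightarrow> ereal a + b \<le> b" by (cases b) auto
lemma minf_addle: "(-\<infinity>::ereal) + b \<le> b" by (cases b) auto

lemma admissible_scale: "admissible m R D p \<Longrightarrow> c > 0 \<Longrightarrow> admissible m R (\<lambda>j. c *\<^sub>R D j) p"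
  unfolding admissible_def is_diag_def psd_def
  by (auto simp: scaleR_matrix_vector_assoc[symmetric] inner_commute)

lemma mvolV: "m > 0 \<Longrightarrow> ereal (real m) * volV m p D = vol_sum m p D"
  unfolding volV_def by (simp add: mult.assoc[symmetric])

lemma K1:
  fixes y :: "nat \<Rightarrow> real^'k" and D :: "nat \<Rightarrow> real^'k^'k"
  assumes r: "1 \<le> r" "r \<le> n" and m: "m > 0" and adm: "admissible m R D p"
    and s: "sigma_r r (map (\<lambda>i. mdist A m R D p mu (y i)) [0..<n]) = s" "s > 0"
  shows "feasA A m y n r R mu (\<lambda>j. (1/s) *\<^sub>R D j) p"
    and "objB A m y n r R mu D p = eln (ereal (real m) * volV m p (\<lambda>j. (1/s) *\<^sub>R D j))"
proof -
  have pp: "\<forall>j<m. p j > 0" and ad: "\<forall>j<m. is_diag (D j) \<and> psd (D j) \<and> p j > 0"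
    using adm by (auto simp: admissible_def)
  have md: "mdist A m R (\<lambda>j. (1/s) *\<^sub>R D j) p mu (y i) = (1/s) * mdist A m R D p mu (y i)" for i
    using mdist_scale[OF pp, of "1/s"] s by simp
  have "{i. i < n \<and> mdist A m R (\<lambda>j. (1/s) *\<^sub>R D j) p mu (y i) \<le> 1}
      = {i. i < n \<and> mdist A m R D p mu (y i) \<le> s}"
  proof -
    have "mdist A m R (\<lambda>j. (1/s) *\<^sub>R D j) p mu (y i) \<le> 1 \<longleftrightarrow> mdist A m R D p mu (y i) \<le> s" for i
      unfolding md using s(2) by (simp add: field_simps)
    then show ?thesis by blast
  qed
  then show "feasA A m y n r R mu (\<lambda>j. (1/s) *\<^sub>R D j) p"
    using sigma_map_props(2)[OF r, of "\<lambda>i. mdist A m R D p mu (y i)"] admissible_scale[OF adm, of "1/s"] s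
    by (simp add: feasA_def)
  have X: "vol_sum m p D > 0" using vol_sum_pos[OF ad m] .
  have "ereal (real m) * volV m p (\<lambda>j. (1/s) *\<^sub>R D j) = vol_sum m p (\<lambda>j. (1/s) *\<^sub>R D j)"
    using mvolV[OF m] .
  also have "\<dots> = ereal ((1/(1/s)) ^ CARD('k)) * vol_sum m p D"
    using vol_sum_scale[OF ad, of "1/s"] s by simp
  also have "\<dots> = ereal (s ^ CARD('k)) * vol_sum m p D" by simp
  finally have "eln (ereal (real m) * volV m p (\<lambda>j. (1/s) *\<^sub>R D j)) = ereal (ln (s ^ CARD('k))) + eln (vol_sum m p D)"
    using eln_mult[OF _ X, of "s ^ CARD('k)"] s by simp
  also have "\<dots> = ereal (real CARD('k) * ln s) + eln (vol_sum m p D)"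
    using s by (simp add: ln_realpow)
  also have "\<dots> = objB A m y n r R mu D p"
    unfolding objB_def s(1) using s by (simp add: eln_ereal_pos)
  finally show "objB A m y n r R mu D p = eln (ereal (real m) * volV m p (\<lambda>j. (1/s) *\<^sub>R D j))" ..
qed

lemma K2:
  fixes y :: "nat \<Rightarrow> real^'k" and D :: "nat \<Rightarrow> real^'k^'k"
  assumes r: "1 \<le> r" "r \<le> n" and m: "m > 0" and f: "feasA A m y n r R mu D p"
  shows "objB A m y n r R mu D p \<le> eln (ereal (real m) * volV m p D)"
proof -
  let ?f = "\<lambda>i. mdist A m R D p mu (y i)"
  let ?s = "sigma_r r (map ?f [0..<n])"
  have ad: "\<forall>j<m. is_diag (D j) \<and> psd (D j) \<and> p j > 0" using f by (auto simp: feasA_def admissible_def)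
  have s1: "?s \<le> 1" using f r by (intro sigma_le) (auto simp: feasA_def)
  have s0: "?s \<ge> 0" using sigma_map_props(1)[OF r, of ?f] mdist_nonneg by auto
  have e: "eln (ereal (real m) * volV m p D) = eln (vol_sum m p D)" using mvolV[OF m, of p D] by simp
  show ?thesis
  proof (cases "?s > 0")
    case True
    have "objB A m y n r R mu D p = ereal (real CARD('k) * ln ?s) + eln (vol_sum m p D)"
      unfolding objB_def using True by (simp add: eln_ereal_pos)
    also have "\<dots> \<le> eln (vol_sum m p D)"
      using True s1 by (intro ereal_addle mult_nonneg_nonpos) auto
    finally show ?thesis using e by simp
  next
    case False
    then have "?s = 0" using s0 by simp
    then have "objB A m y n r R mu D p = -\<infinity> + eln (vol_sum m p D)"
      unfolding objB_def by (simp add: eln_def)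
    then show ?thesis using e minf_addle by simp
  qed
qed

lemma K4:
  fixes y :: "nat \<Rightarrow> real^'k" and D :: "nat \<Rightarrow> real^'k^'k"
  assumes r: "1 \<le> r" "r \<le> n" and m: "m > 0" and adm: "admissible m R D p"
    and s: "sigma_r r (map (\<lambda>i. mdist A m R D p mu (y i)) [0..<n]) = 0"
    and X: "vol_sum m p D = ereal x" and e: "e > 0"
  shows "\<exists>c>0. feasA A m y n r R mu (\<lambda>j. c *\<^sub>R D j) p \<and> volV m p (\<lambda>j. c *\<^sub>R D j) \<le> ereal e"
proof -
  have pp: "\<forall>j<m. p j > 0" and ad: "\<forall>j<m. is_diag (D j) \<and> psd (D j) \<and> p j > 0"
    using adm by (auto simp: admissible_def)
  have x0: "x > 0" using vol_sum_pos[OF ad m] X by simp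
  define c where "c = x / (real m * e) + 1"
  have c1: "c \<ge> 1" using x0 m e by (simp add: c_def)
  have "{i. i < n \<and> mdist A m R D p mu (y i) \<le> 0}
      \<subseteq> {i. i < n \<and> mdist A m R (\<lambda>j. c *\<^sub>R D j) p mu (y i) \<le> 1}"
  proof (intro subsetI, simp, elim conjE)
    fix i assume "i < n" "mdist A m R D p mu (y i) \<le> 0"
    then have "c * mdist A m R D p mu (y i) \<le> 0" using c1 by (intro mult_nonneg_nonpos) auto
    then show "mdist A m R (\<lambda>j. c *\<^sub>R D j) p mu (y i) \<le> 1"
      using mdist_scale[OF pp, where c=c and A=A and R=R and D=D and mu=mu and y="y i"] c1 by simp
  qed
  then have "card {i. i < n \<and> mdist A m R D p mu (y i) \<le> 0}
      \<le> card {i. i < n \<and> mdist A m R (\<lambda>j. c *\<^sub>R D j) p mu (y i) \<le> 1}"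
    by (intro card_mono) auto
  then have feas: "feasA A m y n r R mu (\<lambda>j. c *\<^sub>R D j) p"
    using sigma_map_props(2)[OF r, of "\<lambda>i. mdist A m R D p mu (y i)"] s admissible_scale[OF adm, of c] c1
    by (simp add: feasA_def)
  have "volV m p (\<lambda>j. c *\<^sub>R D j) = ereal (1 / real m) * (ereal ((1/c) ^ CARD('k)) * ereal x)"
    unfolding volV_def using vol_sum_scale[OF ad, of c] c1 X by simp
  also have "\<dots> = ereal (x / (real m * c ^ CARD('k)))" by (simp add: power_one_over)
  also have "\<dots> \<le> ereal e"
  proof -
    have "c \<le> c ^ CARD('k)" using c1 by (simp add: power_increasing[of 1 "CARD('k)" c, simplified])
    then have "x / (real m * c ^ CARD('k)) \<le> x / (real m * c)"
      using x0 m c1 by (intro divide_left_mono mult_left_mono mult_pos_pos) auto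
    also have "\<dots> \<le> e"
    proof -
      have mc: "real m * c > 0" using m c1 by simp
      have "x \<le> e * (real m * c)" unfolding c_def using x0 m e by (simp add: field_simps)
      then show ?thesis using mc by (simp add: divide_le_eq mult.commute)
    qed
    finally show ?thesis by simp
  qed
  finally have "volV m p (\<lambda>j. c *\<^sub>R D j) \<le> ereal e" .
  moreover have "c > 0" using c1 by simp
  ultimately show ?thesis using feas by blast
qed

lemma volV_nn: assumes "admissible m R D p" "m > 0" shows "volV m p D \<ge> 0"
proof -
  have "vol_sum m p D > 0" using assms vol_sum_pos[of m D p] by (auto simp: admissible_def)
  then show ?thesis unfolding volV_def using assms(2) by (cases "vol_sum m p D") auto
qed


theorem proposition2:
  fixes y :: "nat \<Rightarrow> real^'k" and A :: "nat \<Rightarrow> (real^'k) set" and n m r :: nat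
  assumes r_ge: "1 \<le> r" and r_le: "r \<le> n"
    and disj: "\<forall>i<m. \<forall>j<m. i \<noteq> j \<longrightarrow> A i \<inter> A j = {}"
    and cover: "(\<Union>j<m. A j) = UNIV"
  defines "valA \<equiv> INF x \<in> {(R, mu, D, p). feasA A m y n r R mu D p}.
                    (case x of (R, mu, D, p) \<Rightarrow> volV m p D)"
    and "valB \<equiv> INF x \<in> {(R, mu, D, p). admissible m R D p}.
                    (case x of (R, mu, D, p) \<Rightarrow> objB A m y n r R mu D p)"
  shows "valB = eln (ereal (real m) * valA)
    \<and> (\<forall>R mu D p. feasA A m y n r R mu D p \<and> volV m p D = valA
          \<longrightarrow> admissible m R D p \<and> objB A m y n r R mu D p = valB)
    \<and> (\<forall>R mu D p. admissible m R D p \<and> objB A m y n r R mu D p = valB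
          \<and> sigma_r r (map (\<lambda>i. mdist A m R D p mu (y i)) [0..<n]) > 0
          \<longrightarrow> (let s = sigma_r r (map (\<lambda>i. mdist A m R D p mu (y i)) [0..<n])
               in feasA A m y n r R mu (\<lambda>j. (1 / s) *\<^sub>R D j) p
                  \<and> volV m p (\<lambda>j. (1 / s) *\<^sub>R D j) = valA))"
proof -
  have m: "m > 0"
  proof (rule ccontr)
    assume "\<not> m > 0"
    then have "m = 0" by simp
    then show False using cover by auto
  qed
  let ?g = "\<lambda>x. case x of (R, mu, D, p) \<Rightarrow> volV m p D"
  let ?SA = "{(R, mu, D, p). feasA A m y n r R mu D p}"
  have lowA: "valA \<le> volV m p D" if "feasA A m y n r R mu D p" for R mu D p
    unfolding valA_def by (rule INF_lower2[of "(R, mu, D, p)"]) (use that in auto)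
  have lowB: "valB \<le> objB A m y n r R mu D p" if "admissible m R D p" for R mu D p
    unfolding valB_def by (rule INF_lower2[of "(R, mu, D, p)"]) (use that in auto)
  have vA0: "valA \<ge> 0" unfolding valA_def
    by (rule INF_greatest) (auto simp: feasA_def intro: volV_nn[OF _ m])
  have P1a_pt: "eln (ereal (real m) * valA) \<le> objB A m y n r R mu D p"
    if adm: "admissible m R D p" for R mu D p
  proof -
    let ?f = "\<lambda>i. mdist A m R D p mu (y i)"
    let ?s = "sigma_r r (map ?f [0..<n])"
    have s0: "?s \<ge> 0" using sigma_map_props(1)[OF r_ge r_le, of ?f] mdist_nonneg by auto
    show ?thesis
    proof (cases "?s > 0")
      case True
      note K = K1[OF r_ge r_le m adm refl True]
      have "ereal (real m) * valA \<le> ereal (real m) * volV m p (\<lambda>j. (1 / ?s) *\<^sub>R D j)"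
        by (intro ereal_mult_left_mono lowA[OF K(1)]) auto
      then show ?thesis unfolding K(2) by (rule eln_mono)
    next
      case False
      then have s: "?s = 0" using s0 by simp
      show ?thesis
      proof (cases "vol_sum m p D = \<infinity>")
        case True
        then have "objB A m y n r R mu D p = \<infinity>" unfolding objB_def s by (simp add: eln_def)
        then show ?thesis by simp
      next
        case False
        have "vol_sum m p D > 0" using adm vol_sum_pos[OF _ m, of D p] by (auto simp: admissible_def)
        with False obtain x where X: "vol_sum m p D = ereal x" by (cases "vol_sum m p D") auto
        have "valA \<le> 0"
        proof (rule ereal_le_epsilon2)
          fix e :: real assume e: "0 < e"
          from K4[OF r_ge r_le m adm s X e] obtain c where
            c: "c > 0" "feasA A m y n r R mu (\<lambda>j. c *\<^sub>R D j) p" "volV m p (\<lambda>j. c *\<^sub>R D j) \<le> ereal e"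
            by blast
          have "valA \<le> ereal e" using lowA[OF c(2)] c(3) by simp
          then show "valA \<le> 0 + ereal e" by simp
        qed
        then have "valA = 0" using vA0 by simp
        then show ?thesis by (simp add: eln_def)
      qed
    qed
  qed
  have P1a: "eln (ereal (real m) * valA) \<le> valB"
    unfolding valB_def by (rule INF_greatest) (auto intro: P1a_pt)
  have "valB \<le> eln (ereal (real m) * Inf (?g ` ?SA))"
  proof (rule eln_Inf_bound)
    show "0 < real m" using m by simp
    show "\<forall>v\<in>?g ` ?SA. 0 \<le> v" by (auto simp: feasA_def intro: volV_nn[OF _ m])
    have *: "valB \<le> eln (ereal (real m) * volV m p D)" if f: "feasA A m y n r R mu D p" for R mu D p
    proof -
      have "valB \<le> objB A m y n r R mu D p" using lowB f by (auto simp: feasA_def)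
      also have "\<dots> \<le> eln (ereal (real m) * volV m p D)" by (rule K2[OF r_ge r_le m f])
      finally show ?thesis .
    qed
    show "\<forall>v\<in>?g ` ?SA. valB \<le> eln (ereal (real m) * v)" using * by auto
  qed
  then have P1b: "valB \<le> eln (ereal (real m) * valA)" unfolding valA_def by simp
  have P1: "valB = eln (ereal (real m) * valA)" using P1a P1b by (rule antisym[rotated])
  have P2: "admissible m R D p \<and> objB A m y n r R mu D p = valB"
    if f: "feasA A m y n r R mu D p" and v: "volV m p D = valA" for R mu D p
  proof -
    have adm: "admissible m R D p" using f by (simp add: feasA_def)
    have "objB A m y n r R mu D p \<le> valB" using K2[OF r_ge r_le m f] v P1 by simp
    moreover have "valB \<le> objB A m y n r R mu D p" by (rule lowB[OF adm])
    ultimately show ?thesis using adm by simp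
  qed
  have P3: "feasA A m y n r R mu (\<lambda>j. (1 / s) *\<^sub>R D j) p \<and> volV m p (\<lambda>j. (1 / s) *\<^sub>R D j) = valA"
    if adm: "admissible m R D p" and o: "objB A m y n r R mu D p = valB"
      and sd: "sigma_r r (map (\<lambda>i. mdist A m R D p mu (y i)) [0..<n]) = s" and sp: "s > 0"
    for R mu D p s
  proof -
    note K = K1[OF r_ge r_le m adm sd sp]
    have "eln (ereal (real m) * volV m p (\<lambda>j. (1 / s) *\<^sub>R D j)) = eln (ereal (real m) * valA)"
      using K(2) o P1 by simp
    note eq = this
    have "ereal (real m) * volV m p (\<lambda>j. (1 / s) *\<^sub>R D j) = ereal (real m) * valA"
    proof (rule eln_inj)
      have "0 \<le> volV m p (\<lambda>j. (1 / s) *\<^sub>R D j)"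
        using volV_nn[OF _ m, of R "\<lambda>j. (1 / s) *\<^sub>R D j" p] K(1) by (simp add: feasA_def)
      then show "0 \<le> ereal (real m) * volV m p (\<lambda>j. (1 / s) *\<^sub>R D j)"
        by (cases "volV m p (\<lambda>j. (1 / s) *\<^sub>R D j)") auto
      show "0 \<le> ereal (real m) * valA" using vA0 by (cases valA) auto
    qed (rule eq)
    then have "volV m p (\<lambda>j. (1 / s) *\<^sub>R D j) = valA" using m by (simp add: ereal_mult_cancel_left)
    then show ?thesis using K(1) by simp
  qed
  have C2: "\<forall>R mu D p. feasA A m y n r R mu D p \<and> volV m p D = valA
          \<longrightarrow> admissible m R D p \<and> objB A m y n r R mu D p = valB"
  proof (intro allI impI)
    fix R mu D p assume "feasA A m y n r R mu D p \<and> volV m p D = valA"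
    then show "admissible m R D p \<and> objB A m y n r R mu D p = valB"
      by (elim conjE) (rule P2)
  qed
  have C3: "\<forall>R mu D p. admissible m R D p \<and> objB A m y n r R mu D p = valB
          \<and> sigma_r r (map (\<lambda>i. mdist A m R D p mu (y i)) [0..<n]) > 0
          \<longrightarrow> (let s = sigma_r r (map (\<lambda>i. mdist A m R D p mu (y i)) [0..<n])
               in feasA A m y n r R mu (\<lambda>j. (1 / s) *\<^sub>R D j) p
                  \<and> volV m p (\<lambda>j. (1 / s) *\<^sub>R D j) = valA)"
    unfolding Let_def
  proof (intro allI impI)
    fix R mu D p
    assume H: "admissible m R D p \<and> objB A m y n r R mu D p = valB
          \<and> sigma_r r (map (\<lambda>i. mdist A m R D p mu (y i)) [0..<n]) > 0"
    show "feasA A m y n r R mu (\<lambda>j. (1 / sigma_r r (map (\<lambda>i. mdist A m R D p mu (y i)) [0..<n])) *\<^sub>R D j) p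
       \<and> volV m p (\<lambda>j. (1 / sigma_r r (map (\<lambda>i. mdist A m R D p mu (y i)) [0..<n])) *\<^sub>R D j) = valA"
      using H by (intro P3) auto
  qed
  show ?thesis using P1 C2 C3 by (rule conjI[OF _ conjI])
qed
end
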